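(* Let $d\ge1$, $p\ge2$, $n<\infty$, and let $\{\xi(i,m)\}$ be martingale differences as in the context with $\mu_m(dp)<\infty$ for all $m=1,\dots,d$. Then $$\sup_{b\in B(d,n)}|Q_d|_p\le\gamma(d)\,p^d\prod_{m=1}^d\mu_m(dp),$$ where $\gamma(1)=\sqrt2$ and $\gamma(d+1)=\sqrt2\,(1+1/d)^d\gamma(d)$.
   Context: Martingale setting: filtration $\mathcal F(0)\subset\mathcal F(1)\subset\cdots$ with $\mathcal F(0)$ trivial; for $m=1,\dots,d$, $\xi(i,m)$ is $\mathcal F(i)$-measurable, integrable, $\mathbf E[\xi(i,m)\mid\mathcal F(i-1)]=0$. $I(d,n)=\{(i_1,\dots,i_d):1\le i_1<\dots<i_d\le n\}$, $\xi(I)=\prod_m\xi(i_m,m)$, $Q_d=\sum_{I\in I(d,n)}b(I)\xi(I)$, $B(d,n)=\{b:\sum_Ib(I)^2=1\}$. $|\eta|_p=(\mathbf E|\eta|^p)^{1/p}$, $\mu_m(p)=\sup_i|\xi(i,m)|_p$. *)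

theory Defs
  imports "HOL-Probability.Probability"
begin

text \<open>gamma(1) = sqrt 2, gamma(d+1) = sqrt 2 * (1 + 1/d)^d * gamma(d); gamma 0 is unused.\<close>
fun gamma_const :: "nat \<Rightarrow> real" where
  "gamma_const 0 = 0"
| "gamma_const (Suc 0) = sqrt 2"
| "gamma_const (Suc (Suc d)) =
     sqrt 2 * (1 + 1 / real (Suc d)) ^ (Suc d) * gamma_const (Suc d)"

definition index_set :: "nat \<Rightarrow> nat \<Rightarrow> nat list set" where
  "index_set d n = {is. length is = d \<and> sorted_wrt (<) is \<and> set is \<subseteq> {1..n}}"

text \<open>xi(I) = prod_m xi(i_m, m), m = 1..d (list position k corresponds to m = k+1).\<close>
definition xi_prod :: "(nat \<Rightarrow> nat \<Rightarrow> 'a \<Rightarrow> real) \<Rightarrow> nat list \<Rightarrow> 'a \<Rightarrow> real" where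
  "xi_prod \<xi> is x = (\<Prod>k<length is. \<xi> (is ! k) (Suc k) x)"

definition Q_form :: "nat \<Rightarrow> nat \<Rightarrow> (nat list \<Rightarrow> real) \<Rightarrow> (nat \<Rightarrow> nat \<Rightarrow> 'a \<Rightarrow> real) \<Rightarrow> 'a \<Rightarrow> real" where
  "Q_form d n b \<xi> x = (\<Sum>I\<in>index_set d n. b I * xi_prod \<xi> I x)"

definition moment :: "'a measure \<Rightarrow> real \<Rightarrow> ('a \<Rightarrow> real) \<Rightarrow> ennreal" where
  "moment M p X = (\<integral>\<^sup>+ x. ennreal (\<bar>X x\<bar> powr p) \<partial>M)"

text \<open>mu_m(q) = sup_{i>=1} |xi(i,m)|_q (used only when these are finite).\<close>
definition mu :: "'a measure \<Rightarrow> (nat \<Rightarrow> nat \<Rightarrow> 'a \<Rightarrow> real) \<Rightarrow> nat \<Rightarrow> real \<Rightarrow> real" where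
  "mu M \<xi> m q = (SUP i\<in>{1..}. (\<integral> x. \<bar>\<xi> i m x\<bar> powr q \<partial>M) powr (1 / q))"

end

theory Submission
  imports Defs
begin


lemma abs_powr_sq: "\<bar>s\<bar> powr a = (s * s) powr (a/2)" for s a :: real
proof -
  have e: "(s * s) = \<bar>s\<bar> powr 2" by (cases "s=0") (auto simp: powr_numeral power2_eq_square)
  have "(\<bar>s\<bar> powr 2) powr (a/2) = \<bar>s\<bar> powr a" by (subst powr_powr) simp
  then show ?thesis by (simp only: e)
qed

lemma deriv_absp_mult:
  fixes a :: real assumes a: "a > 0"
  shows "((\<lambda>t. \<bar>t\<bar> powr a * t) has_real_derivative ((a+1) * \<bar>t\<bar> powr a)) (at t)"
proof (cases "t = 0")
  case True
  have "((\<lambda>h. \<bar>h\<bar> powr a) \<longlongrightarrow> 0) (at 0)"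
  proof -
    have "((\<lambda>h. \<bar>h\<bar> powr a) \<longlongrightarrow> \<bar>0\<bar> powr a) (at (0::real))"
      using a by (intro tendsto_intros) auto
    then show ?thesis by simp
  qed
  moreover have "eventually (\<lambda>h. \<bar>h\<bar> powr a = ((\<bar>0 + h\<bar> powr a * (0 + h)) - \<bar>0\<bar> powr a * 0) / h) (at (0::real))"
    by (auto simp: eventually_at_filter)
  ultimately have "((\<lambda>h. ((\<bar>0 + h\<bar> powr a * (0 + h)) - \<bar>0\<bar> powr a * 0) / h) \<longlongrightarrow> (a+1) * \<bar>0\<bar> powr a) (at 0)"
    by (simp add: tendsto_cong)
  then show ?thesis using True by (simp add: DERIV_def)
next
  case False
  have e: "eventually (\<lambda>s. \<bar>s\<bar> powr a * s = (s * s) powr (a/2) * s) (nhds t)"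
  proof -
    show ?thesis by (simp add: abs_powr_sq)
  qed
  have "((\<lambda>s. (s * s) powr (a/2) * s) has_real_derivative ((a+1) * \<bar>t\<bar> powr a)) (at t)"
  proof -
    have pos: "t * t > 0" using False by (auto simp: zero_less_mult_iff linorder_neq_iff)
    have "((\<lambda>s. (s * s) powr (a/2) * s) has_real_derivative
        (a/2 * (t * t) powr (a/2 - 1) * (t + t)) * t + (t * t) powr (a/2)) (at t)"
      using pos by (auto intro!: derivative_eq_intros)
    moreover have "(a/2 * (t * t) powr (a/2 - 1) * (t + t)) * t + (t * t) powr (a/2) = (a+1) * \<bar>t\<bar> powr a"
    proof -
      have "(t * t) powr (a/2 - 1) * (t * t) = (t * t) powr (a/2)" using pos
        by (simp add: powr_diff)
      moreover have "(t * t) powr (a/2) = \<bar>t\<bar> powr a" by (simp add: abs_powr_sq)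
      ultimately show ?thesis by (simp add: algebra_simps)
    qed
    ultimately show ?thesis by simp
  qed
  then show ?thesis
    by (subst DERIV_cong_ev[OF refl e refl])
qed

lemma absp_split: "\<bar>t\<bar> powr p = \<bar>t\<bar> powr (p-2) * t * t" if "p > 2" for t p :: real
proof (cases "t = 0")
  case True then show ?thesis using that by simp
next
  case False
  have "\<bar>t\<bar> powr p = \<bar>t\<bar> powr (p-2) * \<bar>t\<bar> powr 2"
    by (subst powr_add[symmetric]) simp
  moreover have "\<bar>t\<bar> powr 2 = t * t" using abs_powr_sq[of t 2] by simp
  ultimately show ?thesis by simp
qed

lemma pointwise_taylor:
  fixes p x y :: real assumes p: "p > 2"
  shows "\<bar>x + y\<bar> powr p \<le> \<bar>x\<bar> powr p + p * (\<bar>x\<bar> powr (p-2) * x) * y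
          + p * (p-1) / 2 * (\<bar>x\<bar> powr (p-2) + \<bar>x+y\<bar> powr (p-2)) * y\<^sup>2"
proof (cases "y = 0")
  case True then show ?thesis using p by simp
next
  case False
  define diff where "diff = (\<lambda>m::nat. if m = 0 then (\<lambda>t::real. \<bar>t\<bar> powr p)
     else if m = 1 then (\<lambda>t. p * (\<bar>t\<bar> powr (p-2) * t)) else (\<lambda>t. p * ((p-1) * \<bar>t\<bar> powr (p-2))))"
  have d0: "((\<lambda>t::real. \<bar>t\<bar> powr p) has_real_derivative p * (\<bar>t\<bar> powr (p-2) * t)) (at t)" for t
  proof -
    have "((\<lambda>t::real. \<bar>t\<bar> powr (p-2) * t * t) has_real_derivative
       ((p-2+1) * \<bar>t\<bar> powr (p-2)) * t + 1 * (\<bar>t\<bar> powr (p-2) * t)) (at t)"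
      using DERIV_mult[OF deriv_absp_mult[of "p-2" t] DERIV_ident] p by simp
    moreover have "((p-2+1) * \<bar>t\<bar> powr (p-2)) * t + 1 * (\<bar>t\<bar> powr (p-2) * t) = p * (\<bar>t\<bar> powr (p-2) * t)"
      by (simp add: algebra_simps)
    ultimately show ?thesis using absp_split[OF p] by simp
  qed
  have d1: "((\<lambda>t::real. p * (\<bar>t\<bar> powr (p-2) * t)) has_real_derivative p * ((p-1) * \<bar>t\<bar> powr (p-2))) (at t)" for t
  proof -
    have "((\<lambda>t::real. p * (\<bar>t\<bar> powr (p-2) * t)) has_real_derivative p * ((p-2+1) * \<bar>t\<bar> powr (p-2))) (at t)"
      by (intro DERIV_cmult deriv_absp_mult) (use p in simp)
    then show ?thesis by (simp add: algebra_simps)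
  qed
  have D: "\<forall>m t. m < 2 \<and> min x (x+y) \<le> t \<and> t \<le> max x (x+y) \<longrightarrow> DERIV (diff m) t :> diff (Suc m) t"
    using d0 d1 by (auto simp: diff_def less_2_cases_iff)
  obtain z where z: "(if x + y < x then x + y < z \<and> z < x else x < z \<and> z < x + y)"
     and eq: "diff 0 (x+y) = (\<Sum>m<2. (diff m x / fact m) * ((x+y) - x)^m) + (diff 2 z / fact 2) * ((x+y) - x)^2"
    using Taylor[of 2 diff "\<lambda>t. \<bar>t\<bar> powr p" "min x (x+y)" "max x (x+y)" x "x+y", OF _ _ D] False
    by (auto simp: diff_def)
  have eq2: "\<bar>x + y\<bar> powr p = \<bar>x\<bar> powr p + p * (\<bar>x\<bar> powr (p-2) * x) * y + p * (p-1) / 2 * \<bar>z\<bar> powr (p-2) * y\<^sup>2"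
    using eq by (simp add: diff_def eval_nat_numeral)
  have "\<bar>z\<bar> \<le> max \<bar>x\<bar> \<bar>x+y\<bar>" using z by (auto split: if_splits)
  then have "\<bar>z\<bar> powr (p-2) \<le> (max \<bar>x\<bar> \<bar>x+y\<bar>) powr (p-2)"
    by (intro powr_mono2) (use p in auto)
  also have "\<dots> \<le> \<bar>x\<bar> powr (p-2) + \<bar>x+y\<bar> powr (p-2)"
    by (simp add: max_def)
  finally have "p * (p-1) / 2 * \<bar>z\<bar> powr (p-2) * y\<^sup>2 \<le> p * (p-1) / 2 * (\<bar>x\<bar> powr (p-2) + \<bar>x+y\<bar> powr (p-2)) * y\<^sup>2"
    using p by (intro mult_right_mono mult_left_mono) auto
  then show ?thesis using eq2 by linarith
qed



lemma young_scaled: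
  fixes u v A B a b :: real
  assumes ab: "a > 1" "b > 1" "1/a + 1/b = 1" and uv: "u \<ge> 0" "v \<ge> 0" and AB: "A > 0" "B > 0"
  shows "u * v \<le> A powr (1/a) * B powr (1/b) * (u powr a / (a * A) + v powr b / (b * B))"
proof -
  have pa: "A powr (1/a) > 0" "B powr (1/b) > 0" using AB by auto
  have "(u / A powr (1/a)) * (v / B powr (1/b)) \<le> (u / A powr (1/a)) powr a / a + (v / B powr (1/b)) powr b / b"
    by (rule Youngs_inequality[OF ab]) (use uv pa in auto)
  also have "(u / A powr (1/a)) powr a = u powr a / A"
    using uv AB ab by (simp add: powr_divide powr_powr)
  also have "(v / B powr (1/b)) powr b = v powr b / B"
    using uv AB ab by (simp add: powr_divide powr_powr)
  finally have "(u * v) / (A powr (1/a) * B powr (1/b)) \<le> u powr a / (a * A) + v powr b / (b * B)"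
    by (simp add: field_simps)
  then show ?thesis using pa by (simp add: field_simps)
qed

lemma holder_integrable:
  fixes f g :: "'a \<Rightarrow> real" and a b :: real
  assumes ab: "a > 1" "b > 1" "1/a + 1/b = 1"
    and [measurable]: "f \<in> borel_measurable M" "g \<in> borel_measurable M"
    and fi: "integrable M (\<lambda>x. \<bar>f x\<bar> powr a)" and gi: "integrable M (\<lambda>x. \<bar>g x\<bar> powr b)"
  shows "integrable M (\<lambda>x. f x * g x)"
proof -
  have i1: "integrable M (\<lambda>x. \<bar>f x\<bar> powr a / a + \<bar>g x\<bar> powr b / b)" using fi gi by auto
  have i2: "AE x in M. norm (f x * g x) \<le> norm (\<bar>f x\<bar> powr a / a + \<bar>g x\<bar> powr b / b)"
  proof (rule AE_I2)
    fix x
    have "\<bar>f x\<bar> * \<bar>g x\<bar> \<le> \<bar>f x\<bar> powr a / a + \<bar>g x\<bar> powr b / b"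
      by (rule Youngs_inequality[OF ab]) auto
    then show "norm (f x * g x) \<le> norm (\<bar>f x\<bar> powr a / a + \<bar>g x\<bar> powr b / b)"
      using ab by (simp add: abs_mult)
  qed
  show ?thesis by (rule Bochner_Integration.integrable_bound[OF i1 _ i2]) measurable
qed

lemma holder:
  fixes f g :: "'a \<Rightarrow> real" and a b :: real
  assumes ab: "a > 1" "b > 1" "1/a + 1/b = 1"
    and [measurable]: "f \<in> borel_measurable M" "g \<in> borel_measurable M"
    and fi: "integrable M (\<lambda>x. \<bar>f x\<bar> powr a)" and gi: "integrable M (\<lambda>x. \<bar>g x\<bar> powr b)"
  shows "(\<integral>x. \<bar>f x * g x\<bar> \<partial>M) \<le> (\<integral>x. \<bar>f x\<bar> powr a \<partial>M) powr (1/a) * (\<integral>x. \<bar>g x\<bar> powr b \<partial>M) powr (1/b)"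
proof -
  define A where "A = (\<integral>x. \<bar>f x\<bar> powr a \<partial>M)"
  define B where "B = (\<integral>x. \<bar>g x\<bar> powr b \<partial>M)"
  have fgi: "integrable M (\<lambda>x. f x * g x)" by (rule holder_integrable[OF assms])
  have A0: "A \<ge> 0" "B \<ge> 0" unfolding A_def B_def by auto
  show ?thesis
  proof (cases "A = 0 \<or> B = 0")
    case True
    then have "AE x in M. f x * g x = 0"
    proof
      assume "A = 0"
      then have "AE x in M. \<bar>f x\<bar> powr a = 0" using fi unfolding A_def
        by (subst integral_nonneg_eq_0_iff_AE[symmetric]) auto
      then show ?thesis by eventually_elim simp
    next
      assume "B = 0"
      then have "AE x in M. \<bar>g x\<bar> powr b = 0" using gi unfolding B_def
        by (subst integral_nonneg_eq_0_iff_AE[symmetric]) auto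
      then show ?thesis by eventually_elim simp
    qed
    then have "(\<integral>x. \<bar>f x * g x\<bar> \<partial>M) = (\<integral>x. 0 \<partial>M)"
      by (intro integral_cong_AE) auto
    then show ?thesis by (simp flip: A_def B_def)
  next
    case False
    then have AB: "A > 0" "B > 0" using A0 by auto
    have "(\<integral>x. \<bar>f x * g x\<bar> \<partial>M) \<le> (\<integral>x. A powr (1/a) * B powr (1/b) * (\<bar>f x\<bar> powr a / (a * A) + \<bar>g x\<bar> powr b / (b * B)) \<partial>M)"
      using integrable_abs[OF fgi] fi gi
      by (intro integral_mono) (auto simp: abs_mult intro!: young_scaled[OF ab _ _ AB])
    also have "\<dots> = A powr (1/a) * B powr (1/b) * ((\<integral>x. \<bar>f x\<bar> powr a \<partial>M) / (a * A) + (\<integral>x. \<bar>g x\<bar> powr b \<partial>M) / (b * B))"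
      using fi gi by simp
    also have "\<dots> = A powr (1/a) * B powr (1/b)"
      using AB ab by (simp flip: A_def B_def add: field_simps)
    finally show ?thesis by (simp add: A_def B_def)
  qed
qed



lemma holder_q:
  fixes f g :: "'a \<Rightarrow> real" and a b q :: real
  assumes q: "q > 0" "a > q" "b > q" "1/a + 1/b = 1/q"
    and [measurable]: "f \<in> borel_measurable M" "g \<in> borel_measurable M"
    and fi: "integrable M (\<lambda>x. \<bar>f x\<bar> powr a)" and gi: "integrable M (\<lambda>x. \<bar>g x\<bar> powr b)"
  shows "integrable M (\<lambda>x. \<bar>f x * g x\<bar> powr q)"
    "(\<integral>x. \<bar>f x * g x\<bar> powr q \<partial>M) \<le> (\<integral>x. \<bar>f x\<bar> powr a \<partial>M) powr (q/a) * (\<integral>x. \<bar>g x\<bar> powr b \<partial>M) powr (q/b)"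
proof -
  have ab: "a/q > 1" "b/q > 1" "1/(a/q) + 1/(b/q) = 1" using q by (auto simp: field_simps)
  have ea: "\<bar>\<bar>f x\<bar> powr q\<bar> powr (a/q) = \<bar>f x\<bar> powr a" for x using q by (simp add: powr_powr)
  have eb: "\<bar>\<bar>g x\<bar> powr q\<bar> powr (b/q) = \<bar>g x\<bar> powr b" for x using q by (simp add: powr_powr)
  have em: "\<bar>f x\<bar> powr q * \<bar>g x\<bar> powr q = \<bar>f x * g x\<bar> powr q" for x by (simp add: abs_mult powr_mult)
  have i: "integrable M (\<lambda>x. \<bar>f x\<bar> powr q * \<bar>g x\<bar> powr q)"
    by (rule holder_integrable[OF ab]) (use fi gi ea eb in auto)
  then show "integrable M (\<lambda>x. \<bar>f x * g x\<bar> powr q)" by (simp add: em)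
  have "(\<integral>x. \<bar>\<bar>f x\<bar> powr q * \<bar>g x\<bar> powr q\<bar> \<partial>M) \<le> (\<integral>x. \<bar>\<bar>f x\<bar> powr q\<bar> powr (a/q) \<partial>M) powr (1/(a/q)) * (\<integral>x. \<bar>\<bar>g x\<bar> powr q\<bar> powr (b/q) \<partial>M) powr (1/(b/q))"
    by (rule holder[OF ab]) (use fi gi ea eb in auto)
  then show "(\<integral>x. \<bar>f x * g x\<bar> powr q \<partial>M) \<le> (\<integral>x. \<bar>f x\<bar> powr a \<partial>M) powr (q/a) * (\<integral>x. \<bar>g x\<bar> powr b \<partial>M) powr (q/b)"
    using q(1) by (simp add: ea eb em powr_powr)
qed

lemma alg_step:
  fixes p IA IB ID c :: real
  assumes p: "p > 2" and nn: "IA \<ge> 0" "IB \<ge> 0" "ID \<ge> 0" "c \<ge> 0"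
    and h: "IB \<le> IA + c * (IA powr ((p-2)/p) + IB powr ((p-2)/p)) * ID powr (2/p)"
  shows "IB powr (2/p) \<le> IA powr (2/p) + 2 * c * ID powr (2/p)"
proof (rule ccontr)
  define a where "a = IA powr (2/p)"
  define z where "z = IB powr (2/p)"
  define e where "e = ID powr (2/p)"
  define k where "k = (p-2)/2"
  have k: "k > 0" using p by (simp add: k_def)
  have ae: "a \<ge> 0" "z \<ge> 0" "e \<ge> 0" by (auto simp: a_def z_def e_def)
  have conv: "X powr ((p-2)/p) = (X powr (2/p)) powr k" "X = (X powr (2/p)) powr k * X powr (2/p)" if "X \<ge> 0" for X
  proof -
    have kk: "2/p * k = (p-2)/p" "2 * k / p = (p-2)/p" using p by (simp_all add: k_def field_simps)
    show "X powr ((p-2)/p) = (X powr (2/p)) powr k" by (simp add: powr_powr kk)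
    have "(X powr (2/p)) powr k * X powr (2/p) = X powr ((p-2)/p) * X powr (2/p)"
      by (simp add: powr_powr kk)
    also have "\<dots> = X powr 1" using p by (simp add: powr_add[symmetric] add_divide_distrib[symmetric])
    also have "\<dots> = X" using that by (cases "X = 0") auto
    finally show "X = (X powr (2/p)) powr k * X powr (2/p)" by simp
  qed
  assume "\<not> ?thesis"
  then have zg: "z > a + 2*c*e" by (simp add: a_def z_def e_def)
  have h2: "z powr k * z \<le> a powr k * a + c * (a powr k + z powr k) * e"
    using h conv[OF nn(1)] conv[OF nn(2)] by (simp add: a_def z_def e_def)
  have zp: "z > 0" using zg ae nn by (smt (verit) mult_nonneg_nonneg)
  have "z powr k \<ge> a powr k" using zg ae nn k
    by (intro powr_mono2) (auto, smt (verit) mult_nonneg_nonneg)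
  have "z powr k * (z - c*e) > z powr k * (a + c*e)"
    using zg zp by (intro mult_strict_left_mono) auto
  moreover have "z powr k * (a + c*e) \<ge> a powr k * (a + c*e)"
    using \<open>z powr k \<ge> a powr k\<close> ae nn by (intro mult_right_mono) auto
  ultimately have "z powr k * z - c * z powr k * e > a powr k * a + c * a powr k * e"
    by (simp add: algebra_simps)
  with h2 show False by (simp add: algebra_simps)
qed



lemma sum_powr_bound:
  fixes x y p :: real assumes "p \<ge> 0"
  shows "\<bar>x + y\<bar> powr p \<le> 2 powr p * (\<bar>x\<bar> powr p + \<bar>y\<bar> powr p)"
proof -
  have "\<bar>x + y\<bar> \<le> 2 * max \<bar>x\<bar> \<bar>y\<bar>" using abs_triangle_ineq[of x y] by (auto simp: max_def)
  then have "\<bar>x + y\<bar> powr p \<le> (2 * max \<bar>x\<bar> \<bar>y\<bar>) powr p" using assms by (intro powr_mono2) auto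
  also have "\<dots> = 2 powr p * (max \<bar>x\<bar> \<bar>y\<bar>) powr p" by (simp add: powr_mult)
  also have "\<dots> \<le> 2 powr p * (\<bar>x\<bar> powr p + \<bar>y\<bar> powr p)"
    by (intro mult_left_mono) (auto simp: max_def)
  finally show ?thesis .
qed

lemma integrable_sum_powr:
  fixes S D :: "'a \<Rightarrow> real" assumes p: "p \<ge> 0" and [measurable]: "S \<in> borel_measurable M" "D \<in> borel_measurable M"
    and "integrable M (\<lambda>x. \<bar>S x\<bar> powr p)" "integrable M (\<lambda>x. \<bar>D x\<bar> powr p)"
  shows "integrable M (\<lambda>x. \<bar>S x + D x\<bar> powr p)"
proof -
  have i1: "integrable M (\<lambda>x. 2 powr p * (\<bar>S x\<bar> powr p + \<bar>D x\<bar> powr p))" using assms by auto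
  show ?thesis
    by (rule Bochner_Integration.integrable_bound[OF i1]) (auto intro!: AE_I2 sum_powr_bound p)
qed

lemma abs_sgnpow: "\<bar>\<bar>s\<bar> powr (p-2) * s\<bar> powr (p/(p-1)) = \<bar>s\<bar> powr p" if "p \<ge> 2" for s p :: real
proof -
  have "\<bar>\<bar>s\<bar> powr (p-2) * s\<bar> = \<bar>s\<bar> powr (p-1)"
  proof (cases "s = 0")
    case True then show ?thesis using that by simp
  next
    case False
    have "\<bar>\<bar>s\<bar> powr (p-2) * s\<bar> = \<bar>s\<bar> powr (p-2) * \<bar>s\<bar> powr 1" using False by (simp add: abs_mult)
    also have "\<dots> = \<bar>s\<bar> powr (p-1)" by (subst powr_add[symmetric]) simp
    finally show ?thesis .
  qed
  then show ?thesis using that by (simp add: powr_powr)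
qed

lemma mart_step:
  fixes S D :: "'a \<Rightarrow> real" and p :: real
  assumes p: "p \<ge> 2" and [measurable]: "S \<in> borel_measurable M" "D \<in> borel_measurable M"
    and Si: "integrable M (\<lambda>x. \<bar>S x\<bar> powr p)" and Di: "integrable M (\<lambda>x. \<bar>D x\<bar> powr p)"
    and orth: "(\<integral>x. (\<bar>S x\<bar> powr (p-2) * S x) * D x \<partial>M) = 0"
  shows "integrable M (\<lambda>x. \<bar>S x + D x\<bar> powr p)"
    "(\<integral>x. \<bar>S x + D x\<bar> powr p \<partial>M) powr (2/p) \<le>
       (\<integral>x. \<bar>S x\<bar> powr p \<partial>M) powr (2/p) + p * (p-1) * (\<integral>x. \<bar>D x\<bar> powr p \<partial>M) powr (2/p)"
proof -
  show Bi: "integrable M (\<lambda>x. \<bar>S x + D x\<bar> powr p)" by (rule integrable_sum_powr) (use p Si Di in auto)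
  define IA where "IA = (\<integral>x. \<bar>S x\<bar> powr p \<partial>M)"
  define IB where "IB = (\<integral>x. \<bar>S x + D x\<bar> powr p \<partial>M)"
  define ID where "ID = (\<integral>x. \<bar>D x\<bar> powr p \<partial>M)"
  have nn: "IA \<ge> 0" "IB \<ge> 0" "ID \<ge> 0" by (auto simp: IA_def IB_def ID_def)
  have oi: "integrable M (\<lambda>x. (\<bar>S x\<bar> powr (p-2) * S x) * D x)"
  proof (rule holder_integrable[of "p/(p-1)" p])
    show "1 < p / (p - 1)" "1 < p" "1 / (p / (p - 1)) + 1 / p = 1" using p by (auto simp: field_simps)
    show "integrable M (\<lambda>x. \<bar>\<bar>S x\<bar> powr (p - 2) * S x\<bar> powr (p / (p - 1)))"
      using Si by (simp add: abs_sgnpow[OF p])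
  qed (use Di in auto)
  have c2: "IB powr (2/p) \<le> IA powr (2/p) + p * (p-1) * ID powr (2/p)" if "p = 2"
  proof -
    have sq: "\<bar>t\<bar> powr 2 = t * t" for t :: real using abs_powr_sq[of t 2] by simp
    have e: "\<bar>S x\<bar> powr (p-2) * S x = S x" for x using that by simp
    have i3: "integrable M (\<lambda>x. S x * D x)" using oi unfolding e .
    have i1: "integrable M (\<lambda>x. S x * S x)" "integrable M (\<lambda>x. D x * D x)" "integrable M (\<lambda>x. S x * D x)"
      using Si Di i3 that by (auto simp: sq)
    have "IB = (\<integral>x. S x * S x + 2 * (S x * D x) + D x * D x \<partial>M)"
      unfolding IB_def using that by (intro Bochner_Integration.integral_cong) (auto simp: sq algebra_simps)
    also have "\<dots> = IA + 2 * (\<integral>x. S x * D x \<partial>M) + ID"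
      unfolding IA_def ID_def using that i1 by (simp add: sq)
    also have "(\<integral>x. S x * D x \<partial>M) = 0" using orth by (simp add: e)
    finally show ?thesis using that nn by simp
  qed
  have c3: "IB powr (2/p) \<le> IA powr (2/p) + p * (p-1) * ID powr (2/p)" if p2: "p \<noteq> 2"
  proof -
    have p2: "p > 2" using p p2 by simp
    have ab: "p/(p-2) > 1" "p/2 > 1" "1/(p/(p-2)) + 1/(p/2) = 1" using p2 by (auto simp: field_simps)
    have eD: "\<bar>D x * D x\<bar> powr (p/2) = \<bar>D x\<bar> powr p" for x using abs_powr_sq[of "D x" p] by simp
    have eS: "\<bar>\<bar>T\<bar> powr (p-2)\<bar> powr (p/(p-2)) = \<bar>T\<bar> powr p" for T :: real using p2 by (simp add: powr_powr)
    have Di2: "integrable M (\<lambda>x. \<bar>D x * D x\<bar> powr (p/2))" using Di unfolding eD .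
    have T1i: "integrable M (\<lambda>x. \<bar>S x\<bar> powr (p-2) * (D x * D x))"
      by (rule holder_integrable[OF ab]) (use Si Di2 eS in auto)
    have T2i: "integrable M (\<lambda>x. \<bar>S x + D x\<bar> powr (p-2) * (D x * D x))"
      by (rule holder_integrable[OF ab]) (use Bi Di2 eS in auto)
    have T1: "(\<integral>x. \<bar>S x\<bar> powr (p-2) * (D x * D x) \<partial>M) \<le> IA powr ((p-2)/p) * ID powr (2/p)"
    proof -
      have "(\<integral>x. \<bar>\<bar>S x\<bar> powr (p-2) * (D x * D x)\<bar> \<partial>M) \<le> (\<integral>x. \<bar>\<bar>S x\<bar> powr (p-2)\<bar> powr (p/(p-2)) \<partial>M) powr (1/(p/(p-2))) * (\<integral>x. \<bar>D x * D x\<bar> powr (p/2) \<partial>M) powr (1/(p/2))"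
        by (rule holder[OF ab]) (use Si Di2 eS in auto)
      then show ?thesis unfolding eS eD by (simp add: IA_def ID_def abs_mult)
    qed
    have T2: "(\<integral>x. \<bar>S x + D x\<bar> powr (p-2) * (D x * D x) \<partial>M) \<le> IB powr ((p-2)/p) * ID powr (2/p)"
    proof -
      have "(\<integral>x. \<bar>\<bar>S x + D x\<bar> powr (p-2) * (D x * D x)\<bar> \<partial>M) \<le> (\<integral>x. \<bar>\<bar>S x + D x\<bar> powr (p-2)\<bar> powr (p/(p-2)) \<partial>M) powr (1/(p/(p-2))) * (\<integral>x. \<bar>D x * D x\<bar> powr (p/2) \<partial>M) powr (1/(p/2))"
        by (rule holder[OF ab]) (use Bi Di2 eS in auto)
      then show ?thesis unfolding eS eD by (simp add: IB_def ID_def abs_mult)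
    qed
    have "IB \<le> (\<integral>x. \<bar>S x\<bar> powr p + p * ((\<bar>S x\<bar> powr (p-2) * S x) * D x)
          + p * (p-1) / 2 * (\<bar>S x\<bar> powr (p-2) * (D x * D x) + \<bar>S x + D x\<bar> powr (p-2) * (D x * D x)) \<partial>M)"
      unfolding IB_def
    proof (rule integral_mono)
      show "integrable M (\<lambda>x. \<bar>S x\<bar> powr p + p * ((\<bar>S x\<bar> powr (p-2) * S x) * D x)
          + p * (p-1) / 2 * (\<bar>S x\<bar> powr (p-2) * (D x * D x) + \<bar>S x + D x\<bar> powr (p-2) * (D x * D x)))"
        using Si oi T1i T2i by auto
      show "\<bar>S x + D x\<bar> powr p \<le> \<bar>S x\<bar> powr p + p * ((\<bar>S x\<bar> powr (p-2) * S x) * D x)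
          + p * (p-1) / 2 * (\<bar>S x\<bar> powr (p-2) * (D x * D x) + \<bar>S x + D x\<bar> powr (p-2) * (D x * D x))" for x
        using pointwise_taylor[OF p2, of "S x" "D x"] by (simp add: power2_eq_square algebra_simps)
    qed (use Bi in auto)
    also have "\<dots> = IA + p * (\<integral>x. (\<bar>S x\<bar> powr (p-2) * S x) * D x \<partial>M) + p * (p-1) / 2 *
        ((\<integral>x. \<bar>S x\<bar> powr (p-2) * (D x * D x) \<partial>M) + (\<integral>x. \<bar>S x + D x\<bar> powr (p-2) * (D x * D x) \<partial>M))"
      unfolding IA_def using Si oi T1i T2i by simp
    also have "\<dots> \<le> IA + p * (p-1) / 2 * (IA powr ((p-2)/p) * ID powr (2/p) + IB powr ((p-2)/p) * ID powr (2/p))"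
      using T1 T2 p2 orth by (intro add_mono mult_left_mono) auto
    finally have "IB \<le> IA + p * (p-1) / 2 * (IA powr ((p-2)/p) + IB powr ((p-2)/p)) * ID powr (2/p)"
      by (simp add: algebra_simps)
    from alg_step[OF p2 nn _ this] p2 show ?thesis by simp
  qed
  from c2 c3 show "(\<integral>x. \<bar>S x + D x\<bar> powr p \<partial>M) powr (2/p) \<le>
       (\<integral>x. \<bar>S x\<bar> powr p \<partial>M) powr (2/p) + p * (p-1) * (\<integral>x. \<bar>D x\<bar> powr p \<partial>M) powr (2/p)"
    unfolding IA_def IB_def ID_def by blast
qed



lemma mart_sum:
  fixes D :: "nat \<Rightarrow> 'a \<Rightarrow> real" and p :: real
  assumes p: "p \<ge> 2"
    and Dm: "\<And>j. j \<in> {1..n} \<Longrightarrow> D j \<in> borel_measurable M"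
    and Di: "\<And>j. j \<in> {1..n} \<Longrightarrow> integrable M (\<lambda>x. \<bar>D j x\<bar> powr p)"
    and orth: "\<And>j. j \<in> {1..n} \<Longrightarrow>
       (\<integral>x. (\<bar>\<Sum>i\<in>{1..j-1}. D i x\<bar> powr (p-2) * (\<Sum>i\<in>{1..j-1}. D i x)) * D j x \<partial>M) = 0"
  shows "integrable M (\<lambda>x. \<bar>\<Sum>i\<in>{1..n}. D i x\<bar> powr p) \<and>
    (\<integral>x. \<bar>\<Sum>i\<in>{1..n}. D i x\<bar> powr p \<partial>M) powr (2/p) \<le> p * (p-1) * (\<Sum>j\<in>{1..n}. (\<integral>x. \<bar>D j x\<bar> powr p \<partial>M) powr (2/p))"
  using Dm Di orth
proof (induction n)
  case 0
  then show ?case using p by simp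
next
  case (Suc n)
  have IH: "integrable M (\<lambda>x. \<bar>\<Sum>i\<in>{1..n}. D i x\<bar> powr p) \<and>
    (\<integral>x. \<bar>\<Sum>i\<in>{1..n}. D i x\<bar> powr p \<partial>M) powr (2/p) \<le> p * (p-1) * (\<Sum>j\<in>{1..n}. (\<integral>x. \<bar>D j x\<bar> powr p \<partial>M) powr (2/p))"
    using Suc by auto
  have Sm: "(\<lambda>x. \<Sum>i\<in>{1..n}. D i x) \<in> borel_measurable M"
    using Suc.prems(1) by (intro borel_measurable_sum) auto
  have o: "(\<integral>x. (\<bar>\<Sum>i\<in>{1..n}. D i x\<bar> powr (p-2) * (\<Sum>i\<in>{1..n}. D i x)) * D (Suc n) x \<partial>M) = 0"
    using Suc.prems(3)[of "Suc n"] by simp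
  have st: "integrable M (\<lambda>x. \<bar>(\<Sum>i\<in>{1..n}. D i x) + D (Suc n) x\<bar> powr p)"
     "(\<integral>x. \<bar>(\<Sum>i\<in>{1..n}. D i x) + D (Suc n) x\<bar> powr p \<partial>M) powr (2/p) \<le>
       (\<integral>x. \<bar>\<Sum>i\<in>{1..n}. D i x\<bar> powr p \<partial>M) powr (2/p) + p * (p-1) * (\<integral>x. \<bar>D (Suc n) x\<bar> powr p \<partial>M) powr (2/p)"
    by (rule mart_step[OF p Sm Suc.prems(1)[of "Suc n"] conjunct1[OF IH] Suc.prems(2)[of "Suc n"] o], simp, simp)+
  have e: "(\<Sum>i\<in>{1..Suc n}. D i x) = (\<Sum>i\<in>{1..n}. D i x) + D (Suc n) x" for x by simp
  show ?case unfolding e using st IH by (simp add: algebra_simps)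
qed



lemma orth_condexp:
  fixes S Y \<xi> :: "'a \<Rightarrow> real"
  assumes M: "prob_space M" and G: "subalgebra M G" and p: "p \<ge> 2"
    and [measurable]: "S \<in> borel_measurable G" "Y \<in> borel_measurable G" "\<xi> \<in> borel_measurable M"
    and ce: "AE x in M. real_cond_exp M G \<xi> x = 0"
    and Si: "integrable M (\<lambda>x. \<bar>S x\<bar> powr p)" and Yi: "integrable M (\<lambda>x. \<bar>Y x * \<xi> x\<bar> powr p)"
  shows "(\<integral>x. (\<bar>S x\<bar> powr (p-2) * S x) * (Y x * \<xi> x) \<partial>M) = 0"
proof -
  interpret prob_space M by (rule M)
  interpret fms: finite_measure_subalgebra M G
    by unfold_locales (rule G)
  have SM[measurable]: "S \<in> borel_measurable M" "Y \<in> borel_measurable M"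
    by (auto intro: measurable_from_subalg[OF G])
  have fi: "integrable M (\<lambda>x. (\<bar>S x\<bar> powr (p-2) * S x) * (Y x * \<xi> x))"
  proof (rule holder_integrable[of "p/(p-1)" p])
    show "1 < p / (p - 1)" "1 < p" "1 / (p / (p - 1)) + 1 / p = 1" using p by (auto simp: field_simps)
    show "integrable M (\<lambda>x. \<bar>\<bar>S x\<bar> powr (p - 2) * S x\<bar> powr (p / (p - 1)))"
      using Si by (simp add: abs_sgnpow[OF p])
  qed (use Yi in auto)
  have fi': "integrable M (\<lambda>x. (\<bar>S x\<bar> powr (p-2) * S x * Y x) * \<xi> x)"
    using fi by (simp add: mult.assoc)
  have "(\<integral>x. (\<bar>S x\<bar> powr (p-2) * S x * Y x) * real_cond_exp M G \<xi> x \<partial>M) = (\<integral>x. (\<bar>S x\<bar> powr (p-2) * S x * Y x) * \<xi> x \<partial>M)"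
    by (rule fms.real_cond_exp_intg(2)[OF fi']) auto
  moreover have "(\<integral>x. (\<bar>S x\<bar> powr (p-2) * S x * Y x) * real_cond_exp M G \<xi> x \<partial>M) = (\<integral>x. 0 \<partial>M)"
    by (rule integral_cong_AE) (use ce in auto)
  ultimately show ?thesis by (simp add: mult.assoc)
qed



lemma index_set_0: "index_set 0 n = {[]}"
  by (auto simp: index_set_def)

lemma index_set_Suc_0: "index_set (Suc d) 0 = {}"
  by (auto simp: index_set_def)

lemma finite_index_set: "finite (index_set d n)"
proof -
  have "index_set d n \<subseteq> {xs. set xs \<subseteq> {1..n} \<and> length xs = d}" by (auto simp: index_set_def)
  moreover have "finite {xs. set xs \<subseteq> {1..n} \<and> length xs = d}"
    by (rule finite_lists_length_eq) simp
  ultimately show ?thesis by (rule finite_subset)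
qed

lemma index_set_Suc_Suc:
  "index_set (Suc d) (Suc n) = index_set (Suc d) n \<union> (\<lambda>I. I @ [Suc n]) ` index_set d n"
proof
  show "index_set (Suc d) (Suc n) \<subseteq> index_set (Suc d) n \<union> (\<lambda>I. I @ [Suc n]) ` index_set d n"
  proof
    fix J assume J: "J \<in> index_set (Suc d) (Suc n)"
    then have "J \<noteq> []" by (auto simp: index_set_def)
    then obtain I l where Jd: "J = I @ [l]" by (metis rev_exhaust)
    have sI: "sorted_wrt (<) I" and lt: "\<forall>x\<in>set I. x < l" and lI: "length I = d"
      and sub: "set I \<subseteq> {1..Suc n}" and l: "l \<in> {1..Suc n}"
      using J unfolding Jd index_set_def by (auto simp: sorted_wrt_append)
    show "J \<in> index_set (Suc d) n \<union> (\<lambda>I. I @ [Suc n]) ` index_set d n"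
    proof (cases "l = Suc n")
      case True
      then have "I \<in> index_set d n" using sI lt lI sub unfolding index_set_def by force
      then show ?thesis using True Jd by auto
    next
      case False
      then have "J \<in> index_set (Suc d) n" using J lt l sub unfolding Jd index_set_def by force
      then show ?thesis by auto
    qed
  qed
next
  show "index_set (Suc d) n \<union> (\<lambda>I. I @ [Suc n]) ` index_set d n \<subseteq> index_set (Suc d) (Suc n)"
    by (auto simp: index_set_def sorted_wrt_append) (meson atLeastAtMost_iff le_imp_less_Suc subsetD)
qed

lemma index_set_disj: "index_set (Suc d) n \<inter> (\<lambda>I. I @ [Suc n]) ` index_set d n = {}"
  by (auto simp: index_set_def)

lemma sum_index_set_Suc:
  fixes h :: "nat list \<Rightarrow> 'b::comm_monoid_add"
  shows "(\<Sum>J\<in>index_set (Suc d) n. h J) = (\<Sum>j\<in>{1..n}. \<Sum>I\<in>index_set d (j-1). h (I @ [j]))"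
proof (induction n)
  case 0
  then show ?case by (simp add: index_set_Suc_0)
next
  case (Suc n)
  have "(\<Sum>J\<in>index_set (Suc d) (Suc n). h J) = (\<Sum>J\<in>index_set (Suc d) n. h J) + (\<Sum>J\<in>(\<lambda>I. I @ [Suc n]) ` index_set d n. h J)"
    unfolding index_set_Suc_Suc
    by (rule sum.union_disjoint) (auto simp: finite_index_set index_set_disj)
  also have "(\<Sum>J\<in>(\<lambda>I. I @ [Suc n]) ` index_set d n. h J) = (\<Sum>I\<in>index_set d n. h (I @ [Suc n]))"
    by (subst sum.reindex) (auto simp: inj_on_def)
  finally show ?case using Suc by simp
qed

lemma xi_prod_snoc: "xi_prod \<xi> (I @ [j]) x = xi_prod \<xi> I x * \<xi> j (Suc (length I)) x"
  unfolding xi_prod_def by (simp add: nth_append)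

lemma Q_form_0: "Q_form 0 n b \<xi> x = b []"
  by (simp add: Q_form_def index_set_0 xi_prod_def)

lemma Q_form_Suc: "Q_form (Suc d) n b \<xi> x = (\<Sum>j\<in>{1..n}. Q_form d (j-1) (\<lambda>I. b (I @ [j])) \<xi> x * \<xi> j (Suc d) x)"
proof -
  have "Q_form (Suc d) n b \<xi> x = (\<Sum>j\<in>{1..n}. \<Sum>I\<in>index_set d (j-1). b (I @ [j]) * xi_prod \<xi> (I @ [j]) x)"
    unfolding Q_form_def by (rule sum_index_set_Suc)
  also have "\<dots> = (\<Sum>j\<in>{1..n}. \<Sum>I\<in>index_set d (j-1). b (I @ [j]) * xi_prod \<xi> I x * \<xi> j (Suc d) x)"
    by (intro sum.cong refl) (auto simp: xi_prod_snoc index_set_def)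
  also have "\<dots> = (\<Sum>j\<in>{1..n}. Q_form d (j-1) (\<lambda>I. b (I @ [j])) \<xi> x * \<xi> j (Suc d) x)"
    unfolding Q_form_def by (simp add: sum_distrib_right)
  finally show ?thesis .
qed



lemma integrable_sum_powr_set:
  fixes f :: "nat \<Rightarrow> 'a \<Rightarrow> real"
  assumes q: "q \<ge> 0" and fin: "finite A"
    and m: "\<And>i. i \<in> A \<Longrightarrow> f i \<in> borel_measurable M"
    and i: "\<And>i. i \<in> A \<Longrightarrow> integrable M (\<lambda>x. \<bar>f i x\<bar> powr q)"
  shows "integrable M (\<lambda>x. \<bar>\<Sum>i\<in>A. f i x\<bar> powr q)"
  using fin m i
proof (induction A rule: finite_induct)
  case empty
  then show ?case using q by simp
next
  case (insert a A)
  have "integrable M (\<lambda>x. \<bar>f a x + (\<Sum>i\<in>A. f i x)\<bar> powr q)"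
    by (rule integrable_sum_powr) (use q insert in \<open>auto intro!: borel_measurable_sum\<close>)
  then show ?case using insert by simp
qed

lemma gamma_nonneg: "gamma_const d \<ge> 0"
  by (induction d rule: gamma_const.induct) auto

locale mdiff =
  fixes M :: "'a measure" and F :: "nat \<Rightarrow> 'a measure" and \<xi> :: "nat \<Rightarrow> nat \<Rightarrow> 'a \<Rightarrow> real"
    and Dd :: nat and r :: real
  assumes prob: "prob_space M"
    and sub: "\<And>i. subalgebra M (F i)"
    and mono: "\<And>i j. i \<le> j \<Longrightarrow> sets (F i) \<subseteq> sets (F j)"
    and xm: "\<And>i m. i \<ge> 1 \<Longrightarrow> m \<in> {1..Dd} \<Longrightarrow> \<xi> i m \<in> borel_measurable (F i)"
    and ce: "\<And>i m. i \<ge> 1 \<Longrightarrow> m \<in> {1..Dd} \<Longrightarrow> AE x in M. real_cond_exp M (F (i - 1)) (\<xi> i m) x = 0"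
    and xr: "\<And>i m. i \<ge> 1 \<Longrightarrow> m \<in> {1..Dd} \<Longrightarrow> integrable M (\<lambda>x. \<bar>\<xi> i m x\<bar> powr r)"
    and bdd: "\<And>m. m \<in> {1..Dd} \<Longrightarrow>
           bdd_above ((\<lambda>i. (\<integral> x. \<bar>\<xi> i m x\<bar> powr r \<partial>M) powr (1 / r)) ` {1..})"
begin

lemma meas_mono: "i \<le> k \<Longrightarrow> f \<in> borel_measurable (F i) \<Longrightarrow> f \<in> borel_measurable (F k)"
proof -
  assume ik: "i \<le> k" and f: "f \<in> borel_measurable (F i)"
  have "subalgebra (F k) (F i)"
    using sub[of i] sub[of k] mono[OF ik] unfolding subalgebra_def by auto
  then show ?thesis using f by (rule measurable_from_subalg)
qed

lemma measM: "f \<in> borel_measurable (F i) \<Longrightarrow> f \<in> borel_measurable M"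
  by (rule measurable_from_subalg[OF sub])

lemma Q_meas: "d \<le> Dd \<Longrightarrow> Q_form d k b \<xi> \<in> borel_measurable (F k)"
proof -
  assume d: "d \<le> Dd"
  have "(\<lambda>x. xi_prod \<xi> I x) \<in> borel_measurable (F k)" if I: "I \<in> index_set d k" for I
    unfolding xi_prod_def
  proof (rule borel_measurable_prod)
    fix j assume j: "j \<in> {..<length I}"
    have "I ! j \<in> set I" using j by auto
    then have "I ! j \<in> {1..k}" using I by (auto simp: index_set_def)
    moreover have "Suc j \<in> {1..Dd}" using j I d by (auto simp: index_set_def)
    ultimately show "\<xi> (I ! j) (Suc j) \<in> borel_measurable (F k)"
      by (intro meas_mono[OF _ xm]) auto
  qed
  then show ?thesis unfolding Q_form_def[abs_def]
    by (intro borel_measurable_sum borel_measurable_times) auto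
qed

lemma mu_upper: "i \<ge> 1 \<Longrightarrow> m \<in> {1..Dd} \<Longrightarrow> (\<integral> x. \<bar>\<xi> i m x\<bar> powr r \<partial>M) powr (1 / r) \<le> mu M \<xi> m r"
  unfolding mu_def by (rule cSUP_upper[OF _ bdd]) auto

lemma mu_nonneg: "m \<in> {1..Dd} \<Longrightarrow> mu M \<xi> m r \<ge> 0"
  using mu_upper[of 1 m] by (meson order_trans powr_ge_zero order_refl)

end



context mdiff begin

lemma assemble:
  fixes Y :: "nat \<Rightarrow> 'a \<Rightarrow> real" and c :: "nat \<Rightarrow> real" and K q :: real
  assumes q: "q \<ge> 2" and m0: "m0 \<in> {1..Dd}" and K: "K \<ge> 0"
    and Ym: "\<And>j. j \<in> {1..n} \<Longrightarrow> Y j \<in> borel_measurable (F (j-1))"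
    and Yi: "\<And>j. j \<in> {1..n} \<Longrightarrow> integrable M (\<lambda>x. \<bar>Y j x * \<xi> j m0 x\<bar> powr q)"
    and Yb: "\<And>j. j \<in> {1..n} \<Longrightarrow> (\<integral>x. \<bar>Y j x * \<xi> j m0 x\<bar> powr q \<partial>M) powr (1/q) \<le> K * c j"
  shows "integrable M (\<lambda>x. \<bar>\<Sum>j\<in>{1..n}. Y j x * \<xi> j m0 x\<bar> powr q) \<and>
    (\<integral>x. \<bar>\<Sum>j\<in>{1..n}. Y j x * \<xi> j m0 x\<bar> powr q \<partial>M) powr (1/q) \<le> sqrt (q * (q-1)) * K * sqrt (\<Sum>j\<in>{1..n}. (c j)\<^sup>2)"
proof -
  define D where "D = (\<lambda>j x. Y j x * \<xi> j m0 x)"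
  have DF: "D j \<in> borel_measurable (F j)" if "j \<in> {1..n}" for j
    unfolding D_def using that m0
    by (intro borel_measurable_times meas_mono[OF _ Ym] xm) auto
  have Dm: "D j \<in> borel_measurable M" if "j \<in> {1..n}" for j using DF[OF that] by (rule measM)
  have orth: "(\<integral>x. (\<bar>\<Sum>i\<in>{1..j-1}. D i x\<bar> powr (q-2) * (\<Sum>i\<in>{1..j-1}. D i x)) * D j x \<partial>M) = 0"
    if j: "j \<in> {1..n}" for j
  proof -
    have Sm: "(\<lambda>x. \<Sum>i\<in>{1..j-1}. D i x) \<in> borel_measurable (F (j-1))"
      using j by (intro borel_measurable_sum meas_mono[OF _ DF]) auto
    have Si: "integrable M (\<lambda>x. \<bar>\<Sum>i\<in>{1..j-1}. D i x\<bar> powr q)"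
      using j q by (intro integrable_sum_powr_set Dm) (auto simp: D_def intro!: Yi)
    have xM: "\<xi> j m0 \<in> borel_measurable M" using j m0 by (intro measM[OF xm]) auto
    show ?thesis unfolding D_def
      by (rule orth_condexp[OF prob sub q Sm[unfolded D_def] Ym[OF j]])
         (use j m0 Yi Si xM ce in \<open>auto simp: D_def\<close>)
  qed
  have ms: "integrable M (\<lambda>x. \<bar>\<Sum>i\<in>{1..n}. D i x\<bar> powr q) \<and>
    (\<integral>x. \<bar>\<Sum>i\<in>{1..n}. D i x\<bar> powr q \<partial>M) powr (2/q) \<le> q * (q-1) * (\<Sum>j\<in>{1..n}. (\<integral>x. \<bar>D j x\<bar> powr q \<partial>M) powr (2/q))"
    by (rule mart_sum[OF q Dm _ orth]) (auto simp: D_def intro!: Yi)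
  have nb: "(\<integral>x. \<bar>D j x\<bar> powr q \<partial>M) powr (2/q) \<le> (K * c j)\<^sup>2" if j: "j \<in> {1..n}" for j
  proof -
    have "(\<integral>x. \<bar>D j x\<bar> powr q \<partial>M) powr (2/q) = ((\<integral>x. \<bar>D j x\<bar> powr q \<partial>M) powr (1/q))\<^sup>2"
      by (simp add: power2_eq_square powr_add[symmetric])
    also have "\<dots> \<le> (K * c j)\<^sup>2"
      using Yb[OF j] by (intro power_mono) (auto simp: D_def)
    finally show ?thesis .
  qed
  define X where "X = (\<integral>x. \<bar>\<Sum>i\<in>{1..n}. D i x\<bar> powr q \<partial>M)"
  have X0: "X \<ge> 0" by (simp add: X_def)
  have "X powr (2/q) \<le> q * (q-1) * (\<Sum>j\<in>{1..n}. (K * c j)\<^sup>2)"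
  proof -
    have "(\<Sum>j\<in>{1..n}. (\<integral>x. \<bar>D j x\<bar> powr q \<partial>M) powr (2/q)) \<le> (\<Sum>j\<in>{1..n}. (K * c j)\<^sup>2)"
      by (intro sum_mono nb)
    then have "q * (q-1) * (\<Sum>j\<in>{1..n}. (\<integral>x. \<bar>D j x\<bar> powr q \<partial>M) powr (2/q)) \<le> q * (q-1) * (\<Sum>j\<in>{1..n}. (K * c j)\<^sup>2)"
      using q by (intro mult_left_mono) auto
    then show ?thesis using ms unfolding X_def by linarith
  qed
  also have "\<dots> = q * (q-1) * (K\<^sup>2 * (\<Sum>j\<in>{1..n}. (c j)\<^sup>2))"
    by (simp add: power_mult_distrib sum_distrib_left)
  also have "\<dots> = (sqrt (q * (q-1)) * K * sqrt (\<Sum>j\<in>{1..n}. (c j)\<^sup>2))\<^sup>2"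
  proof -
    have s0: "(\<Sum>j\<in>{1..n}. (c j)\<^sup>2) \<ge> 0" by (intro sum_nonneg) auto
    have q0: "q * (q-1) \<ge> 0" using q by simp
    show ?thesis unfolding power_mult_distrib real_sqrt_pow2[OF s0] real_sqrt_pow2[OF q0] by simp
  qed
  finally have "X powr (2/q) \<le> (sqrt (q * (q-1)) * K * sqrt (\<Sum>j\<in>{1..n}. (c j)\<^sup>2))\<^sup>2" .
  moreover have "X powr (2/q) = (X powr (1/q))\<^sup>2"
    by (simp add: power2_eq_square powr_add[symmetric])
  ultimately have h: "(X powr (1/q))\<^sup>2 \<le> (sqrt (q * (q-1)) * K * sqrt (\<Sum>j\<in>{1..n}. (c j)\<^sup>2))\<^sup>2"
    by linarith
  have y0: "0 \<le> sqrt (q * (q-1)) * K * sqrt (\<Sum>j\<in>{1..n}. (c j)\<^sup>2)"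
    using K q by (intro mult_nonneg_nonneg) (auto intro: sum_nonneg)
  have "X powr (1/q) \<le> sqrt (q * (q-1)) * K * sqrt (\<Sum>j\<in>{1..n}. (c j)\<^sup>2)"
    by (rule power2_le_imp_le[OF h y0])
  then show ?thesis using ms unfolding X_def D_def by simp
qed

end



lemma conj_le_trans: "A \<and> x \<le> y \<Longrightarrow> y \<le> z \<Longrightarrow> z = w \<Longrightarrow> A \<and> x \<le> (w::real)" by auto

lemma sqrt_qq: "q \<ge> 2 \<Longrightarrow> sqrt (q * (q-1)) \<le> sqrt 2 * q" for q :: real
proof -
  assume q: "q \<ge> 2"
  have "sqrt (q * (q-1)) \<le> sqrt (2 * q\<^sup>2)" using q by (intro real_sqrt_le_mono) (simp add: power2_eq_square algebra_simps)
  also have "\<dots> = sqrt 2 * q" using q by (simp add: real_sqrt_mult)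
  finally show ?thesis .
qed

context mdiff begin

lemma Q_Suc_fun: "Q_form (Suc d) n b \<xi> = (\<lambda>x. \<Sum>j\<in>{1..n}. Q_form d (j-1) (\<lambda>I. b (I @ [j])) \<xi> x * \<xi> j (Suc d) x)"
  by (rule ext) (rule Q_form_Suc)

lemma sumsq_Suc: "(\<Sum>j\<in>{1..n}. (sqrt (\<Sum>I\<in>index_set d (j-1). (b (I @ [j]))\<^sup>2))\<^sup>2) = (\<Sum>J\<in>index_set (Suc d) n. (b J)\<^sup>2)"
  by (simp add: sum_index_set_Suc[of "\<lambda>J. (b J)\<^sup>2"] sum_nonneg)

lemma main:
  "1 \<le> d \<Longrightarrow> d \<le> Dd \<Longrightarrow> q \<ge> 2 \<Longrightarrow> real d * q = r \<Longrightarrow>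
   integrable M (\<lambda>x. \<bar>Q_form d n b \<xi> x\<bar> powr q) \<and>
   (\<integral>x. \<bar>Q_form d n b \<xi> x\<bar> powr q \<partial>M) powr (1/q) \<le>
     gamma_const d * q ^ d * sqrt (\<Sum>I\<in>index_set d n. (b I)\<^sup>2) * (\<Prod>m=1..d. mu M \<xi> m r)"
proof (induction d arbitrary: q n b)
  case 0
  then show ?case by simp
next
  case (Suc d)
  note q = \<open>q \<ge> 2\<close>
  define Y where "Y = (\<lambda>j. Q_form d (j-1) (\<lambda>I. b (I @ [j])) \<xi>)"
  define c where "c = (\<lambda>j. sqrt (\<Sum>I\<in>index_set d (j-1). (b (I @ [j]))\<^sup>2))"
  have m0: "Suc d \<in> {1..Dd}" using Suc by auto
  have Ym: "Y j \<in> borel_measurable (F (j-1))" for j unfolding Y_def by (rule Q_meas) (use Suc in auto)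
  have xiM: "\<xi> j (Suc d) \<in> borel_measurable M" if "j \<in> {1..n}" for j
    using that m0 by (intro measM[OF xm]) auto
  have YM: "Y j \<in> borel_measurable M" for j by (rule measM[OF Ym])
  have QE: "Q_form (Suc d) n b \<xi> = (\<lambda>x. \<Sum>j\<in>{1..n}. Y j x * \<xi> j (Suc d) x)"
    unfolding Y_def by (rule Q_Suc_fun)
  have S: "(\<Sum>j\<in>{1..n}. (c j)\<^sup>2) = (\<Sum>J\<in>index_set (Suc d) n. (b J)\<^sup>2)"
    unfolding c_def by (rule sumsq_Suc)
  show ?case
  proof (cases "d = 0")
    case True
    then have qr: "q = r" using Suc by simp
    define K where "K = mu M \<xi> 1 r"
    have K0: "K \<ge> 0" unfolding K_def by (rule mu_nonneg) (use m0 in auto)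
    have Yc: "Y j = (\<lambda>x. b [j])" for j by (simp add: Y_def True Q_form_0 fun_eq_iff)
    have cj: "c j = \<bar>b [j]\<bar>" for j by (simp add: c_def True index_set_0)
    have Yi: "integrable M (\<lambda>x. \<bar>Y j x * \<xi> j (Suc d) x\<bar> powr q)" if j: "j \<in> {1..n}" for j
      using xr[of j "Suc d"] j m0 qr by (simp add: Yc abs_mult powr_mult)
    have Yb: "(\<integral>x. \<bar>Y j x * \<xi> j (Suc d) x\<bar> powr q \<partial>M) powr (1/q) \<le> K * c j" if j: "j \<in> {1..n}" for j
    proof -
      have "(\<integral>x. \<bar>Y j x * \<xi> j (Suc d) x\<bar> powr q \<partial>M) = \<bar>b [j]\<bar> powr q * (\<integral>x. \<bar>\<xi> j (Suc d) x\<bar> powr q \<partial>M)"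
        by (simp add: Yc abs_mult powr_mult)
      then have "(\<integral>x. \<bar>Y j x * \<xi> j (Suc d) x\<bar> powr q \<partial>M) powr (1/q) = \<bar>b [j]\<bar> * (\<integral>x. \<bar>\<xi> j (Suc d) x\<bar> powr q \<partial>M) powr (1/q)"
        using q by (simp add: powr_mult powr_powr)
      also have "\<dots> \<le> \<bar>b [j]\<bar> * K"
        unfolding K_def qr using mu_upper[of j "Suc d"] j m0 True by (intro mult_left_mono) auto
      finally show ?thesis by (simp add: cj mult.commute)
    qed
    have A: "integrable M (\<lambda>x. \<bar>\<Sum>j\<in>{1..n}. Y j x * \<xi> j (Suc d) x\<bar> powr q) \<and>
      (\<integral>x. \<bar>\<Sum>j\<in>{1..n}. Y j x * \<xi> j (Suc d) x\<bar> powr q \<partial>M) powr (1/q) \<le> sqrt (q * (q-1)) * K * sqrt (\<Sum>j\<in>{1..n}. (c j)\<^sup>2)"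
      by (rule assemble[OF q m0 K0 Ym Yi Yb])
    have "sqrt (q * (q-1)) * K * sqrt (\<Sum>j\<in>{1..n}. (c j)\<^sup>2) \<le> sqrt 2 * q * K * sqrt (\<Sum>j\<in>{1..n}. (c j)\<^sup>2)"
      using sqrt_qq[OF q] K0 by (intro mult_right_mono) (auto intro: sum_nonneg)
    moreover have "sqrt 2 * q * K * sqrt (\<Sum>j\<in>{1..n}. (c j)\<^sup>2) =
       gamma_const (Suc d) * q ^ Suc d * sqrt (\<Sum>j\<in>{1..n}. (c j)\<^sup>2) * (\<Prod>m=1..Suc d. mu M \<xi> m r)"
      by (simp add: True K_def)
    ultimately show ?thesis unfolding QE S[symmetric] by (rule conj_le_trans[OF A])
  next
    case False
    then obtain d' where d': "d = Suc d'" by (cases d) auto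
    define q' where "q' = r / d"
    have dpos: "real d \<ge> 1" using False by simp
    have rq: "r = (real d + 1) * q" using Suc.prems(4) by (simp add: algebra_simps)
    have q'q: "q' = q * (1 + 1 / real d)" unfolding q'_def rq using dpos by (simp add: field_simps)
    have q'2: "q' \<ge> 2" using q'q q dpos by (smt (verit) divide_nonneg_nonneg mult_le_cancel_left1 of_nat_0_le_iff)
    have dq': "real d * q' = r" unfolding q'_def using dpos by simp
    define P where "P = (\<Prod>m=1..d. mu M \<xi> m r)"
    define K where "K = gamma_const d * q' ^ d * P * mu M \<xi> (Suc d) r"
    have P0: "P \<ge> 0" unfolding P_def using Suc by (intro prod_nonneg mu_nonneg) auto
    have mu0: "mu M \<xi> (Suc d) r \<ge> 0" by (rule mu_nonneg[OF m0])
    have K0: "K \<ge> 0" unfolding K_def using P0 mu0 q'2 gamma_nonneg[of d] by simp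
    have IH: "integrable M (\<lambda>x. \<bar>Y j x\<bar> powr q') \<and>
       (\<integral>x. \<bar>Y j x\<bar> powr q' \<partial>M) powr (1/q') \<le> gamma_const d * q' ^ d * c j * P" for j
      using Suc.IH[of q' "j-1" "\<lambda>I. b (I @ [j])"] False Suc.prems q'2 dq'
      unfolding Y_def c_def P_def by (simp add: mult_ac)
    have q'e: "q' = q * (real d + 1) / real d" using q'q dpos by (simp add: field_simps)
    have hq1: "q > 0" using q by simp
    have hq2: "q' > q" unfolding q'e using hq1 dpos by (simp add: field_simps)
    have hq3: "r > q" unfolding rq using hq1 dpos by (simp add: field_simps)
    have nz: "q + q * real d \<noteq> 0" using hq1 dpos by (smt (verit) mult_nonneg_nonneg)
    have hq4: "1/q' + 1/r = 1/q" unfolding q'e rq using hq1 dpos nz by (simp add: field_simps)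
    note hq = hq1 hq2 hq3 hq4
    have Yi: "integrable M (\<lambda>x. \<bar>Y j x * \<xi> j (Suc d) x\<bar> powr q)" if j: "j \<in> {1..n}" for j
      by (rule holder_q(1)[OF hq YM xiM[OF j]]) (use IH xr[of j "Suc d"] j m0 in auto)
    have Yb: "(\<integral>x. \<bar>Y j x * \<xi> j (Suc d) x\<bar> powr q \<partial>M) powr (1/q) \<le> K * c j" if j: "j \<in> {1..n}" for j
    proof -
      define A where "A = (\<integral>x. \<bar>Y j x\<bar> powr q' \<partial>M)"
      define B where "B = (\<integral>x. \<bar>\<xi> j (Suc d) x\<bar> powr r \<partial>M)"
      have AB: "A \<ge> 0" "B \<ge> 0" by (auto simp: A_def B_def)
      have nn: "0 \<le> gamma_const d * q' ^ d * c j * P"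
        using gamma_nonneg[of d] P0 q'2 by (intro mult_nonneg_nonneg) (auto simp: c_def intro: sum_nonneg)
      have h: "(\<integral>x. \<bar>Y j x * \<xi> j (Suc d) x\<bar> powr q \<partial>M) \<le> A powr (q/q') * B powr (q/r)"
        unfolding A_def B_def
        by (rule holder_q(2)[OF hq YM xiM[OF j]]) (use IH xr[of j "Suc d"] j m0 in auto)
      have "(\<integral>x. \<bar>Y j x * \<xi> j (Suc d) x\<bar> powr q \<partial>M) powr (1/q) \<le> (A powr (q/q') * B powr (q/r)) powr (1/q)"
        using h hq by (intro powr_mono2) auto
      also have "\<dots> = A powr (1/q') * B powr (1/r)"
        using AB hq by (simp add: powr_mult powr_powr)
      also have "\<dots> \<le> (gamma_const d * q' ^ d * c j * P) * mu M \<xi> (Suc d) r"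
        using nn IH[of j] mu_upper[of j "Suc d"] j m0 AB gamma_nonneg[of d] P0 q'2 unfolding A_def B_def
        by (intro mult_mono) (auto simp: c_def)
      also have "\<dots> = K * c j" by (simp add: K_def mult_ac)
      finally show ?thesis .
    qed
    have A: "integrable M (\<lambda>x. \<bar>\<Sum>j\<in>{1..n}. Y j x * \<xi> j (Suc d) x\<bar> powr q) \<and>
      (\<integral>x. \<bar>\<Sum>j\<in>{1..n}. Y j x * \<xi> j (Suc d) x\<bar> powr q \<partial>M) powr (1/q) \<le> sqrt (q * (q-1)) * K * sqrt (\<Sum>j\<in>{1..n}. (c j)\<^sup>2)"
      by (rule assemble[OF q m0 K0 Ym Yi Yb])
    have "sqrt (q * (q-1)) * K * sqrt (\<Sum>j\<in>{1..n}. (c j)\<^sup>2) \<le> sqrt 2 * q * K * sqrt (\<Sum>j\<in>{1..n}. (c j)\<^sup>2)"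
      using sqrt_qq[OF q] K0 by (intro mult_right_mono) (auto intro: sum_nonneg)
    moreover have "sqrt 2 * q * K * sqrt (\<Sum>j\<in>{1..n}. (c j)\<^sup>2) =
       gamma_const (Suc d) * q ^ Suc d * sqrt (\<Sum>j\<in>{1..n}. (c j)\<^sup>2) * (\<Prod>m=1..Suc d. mu M \<xi> m r)"
    proof -
      have g: "gamma_const (Suc d) = sqrt 2 * (1 + 1 / real d) ^ d * gamma_const d" by (simp add: d')
      have pr: "(\<Prod>m=1..Suc d. mu M \<xi> m r) = P * mu M \<xi> (Suc d) r" unfolding P_def by (simp add: prod.cl_ivl_Suc)
      have qd: "q' ^ d = q ^ d * (1 + 1 / real d) ^ d" by (simp add: q'q power_mult_distrib)
      show ?thesis unfolding g pr K_def qd by (simp add: mult_ac)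
    qed
    ultimately show ?thesis unfolding QE S[symmetric] by (rule conj_le_trans[OF A])
  qed
qed

end



theorem theorem6:
  fixes M :: "'a measure" and F :: "nat \<Rightarrow> 'a measure"
    and \<xi> :: "nat \<Rightarrow> nat \<Rightarrow> 'a \<Rightarrow> real"
    and d n :: nat and p :: real
  assumes "prob_space M"
    and "\<And>i. subalgebra M (F i)"
    and "\<And>i j. i \<le> j \<Longrightarrow> sets (F i) \<subseteq> sets (F j)"
    and "sets (F 0) = {{}, space M}"
    and "d \<ge> 1" and "p \<ge> 2"
    and "\<And>i m. i \<ge> 1 \<Longrightarrow> m \<in> {1..d} \<Longrightarrow> \<xi> i m \<in> borel_measurable (F i)"
    and "\<And>i m. i \<ge> 1 \<Longrightarrow> m \<in> {1..d} \<Longrightarrow> integrable M (\<xi> i m)"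
    and "\<And>i m. i \<ge> 1 \<Longrightarrow> m \<in> {1..d} \<Longrightarrow>
           AE x in M. real_cond_exp M (F (i - 1)) (\<xi> i m) x = 0"
    and "\<And>i m. i \<ge> 1 \<Longrightarrow> m \<in> {1..d} \<Longrightarrow>
           integrable M (\<lambda>x. \<bar>\<xi> i m x\<bar> powr (real d * p))"
    and "\<And>m. m \<in> {1..d} \<Longrightarrow>
           bdd_above ((\<lambda>i. (\<integral> x. \<bar>\<xi> i m x\<bar> powr (real d * p) \<partial>M)
                          powr (1 / (real d * p))) ` {1..})"
  shows "\<forall>b. (\<Sum>I\<in>index_set d n. (b I)\<^sup>2) = 1 \<longrightarrow>
           moment M p (Q_form d n b \<xi>) \<le>
           ennreal ((gamma_const d * p ^ d * (\<Prod>m=1..d. mu M \<xi> m (real d * p))) powr p)"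
proof (intro allI impI)
  fix b :: "nat list \<Rightarrow> real"
  assume b1: "(\<Sum>I\<in>index_set d n. (b I)\<^sup>2) = 1"
  interpret mdiff M F \<xi> d "real d * p"
    by (rule mdiff.intro) (fact assms(1), fact assms(2), fact assms(3), fact assms(7), fact assms(9), fact assms(10), fact assms(11))
  have m: "integrable M (\<lambda>x. \<bar>Q_form d n b \<xi> x\<bar> powr p) \<and>
   (\<integral>x. \<bar>Q_form d n b \<xi> x\<bar> powr p \<partial>M) powr (1/p) \<le>
     gamma_const d * p ^ d * sqrt (\<Sum>I\<in>index_set d n. (b I)\<^sup>2) * (\<Prod>m=1..d. mu M \<xi> m (real d * p))"
    by (rule main) (use assms(5,6) in auto)
  define X where "X = (\<integral>x. \<bar>Q_form d n b \<xi> x\<bar> powr p \<partial>M)"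
  have X0: "X \<ge> 0" unfolding X_def by simp
  have mom: "moment M p (Q_form d n b \<xi>) = ennreal X"
    unfolding moment_def X_def using m by (intro nn_integral_eq_integral) auto
  have "X = (X powr (1/p)) powr p" using assms(6) X0 by (simp add: powr_powr)
  also have "\<dots> \<le> (gamma_const d * p ^ d * (\<Prod>m=1..d. mu M \<xi> m (real d * p))) powr p"
    using m b1 assms(6) unfolding X_def by (intro powr_mono2) auto
  finally show "moment M p (Q_form d n b \<xi>) \<le>
           ennreal ((gamma_const d * p ^ d * (\<Prod>m=1..d. mu M \<xi> m (real d * p))) powr p)"
    unfolding mom by (rule ennreal_leI)
qed


end
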